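(* In the setting of the context (soft interventions, one per latent node, generic parameters), for $k\in[q]$ let $\Delta^{(k)}=(I-\Lambda^{(k)})^{-1}-(I-\Lambda^{(0)})^{-1}$. Then $\operatorname{rank}(\Delta^{(k)})\le1$, with equality if and only if $\mathrm{an}(k)\neq\emptyset$.
   Context: $\Lambda^{(0)}\in\mathbb{R}^{q\times q}$ has $\lambda^{(0)}_{i,j}\ne0$ iff $j\to i$ is an edge of a DAG $\mathcal{G}$ on $[q]$, with generic nonzero entries. For each $k\in[q]$, context $k$ is a soft intervention on node $k$: $\Lambda^{(k)}$ agrees with $\Lambda^{(0)}$ except in row $k$, whose entries are generic with $\lambda^{(k)}_{k,j}\ne\lambda^{(0)}_{k,j}$ whenever $\lambda^{(0)}_{k,j}\ne0$ and $\lambda^{(k)}_{k,j}=0$ otherwise. $\mathrm{an}(k)$ is the set of ancestors of $k$ in $\mathcal{G}$ (nodes $m\ne k$ with a directed path $m\to\cdots\to k$). *)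

theory Defs
  imports "HOL-Analysis.Analysis"
begin

text \<open>A directed graph on the node type 'n is given by an edge predicate
  E, where E j i means that there is an edge j -> i.\<close>

definition edge_rel :: "('n \<Rightarrow> 'n \<Rightarrow> bool) \<Rightarrow> ('n \<times> 'n) set" where
  "edge_rel E = {(j, i). E j i}"

definition is_dag :: "('n \<Rightarrow> 'n \<Rightarrow> bool) \<Rightarrow> bool" where
  "is_dag E \<longleftrightarrow> acyclic (edge_rel E)"

definition ancestors :: "('n \<Rightarrow> 'n \<Rightarrow> bool) \<Rightarrow> 'n \<Rightarrow> 'n set" where
  "ancestors E k = {m. m \<noteq> k \<and> (m, k) \<in> (edge_rel E)\<^sup>+}"

end

theory Submission
  imports Defs
begin

lemma mm_sub_l:
  fixes A B C :: "real^'n::finite^'n"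
  shows "A ** (B - C) = A ** B - A ** C"
  by (simp add: vec_eq_iff matrix_matrix_mult_def sum_subtractf algebra_simps)

lemma mm_sub_r:
  fixes A B C :: "real^'n::finite^'n"
  shows "(B - C) ** A = B ** A - C ** A"
  by (simp add: vec_eq_iff matrix_matrix_mult_def sum_subtractf algebra_simps)

lemma wf_edge:
  fixes E :: "'n::finite \<Rightarrow> 'n \<Rightarrow> bool"
  assumes "is_dag E" shows "wf (edge_rel E)"
  using assms unfolding is_dag_def by (intro finite_acyclic_wf) auto

lemma inv_I_minus:
  fixes M :: "real^'n::finite^'n"
  assumes wf: "wf R" and supp: "\<And>i j. M$i$j \<noteq> 0 \<Longrightarrow> (j,i) \<in> R"
  shows "invertible (mat 1 - M)"
  unfolding invertible_left_inverse matrix_left_invertible_ker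
proof (intro allI impI)
  fix x :: "real^'n"
  assume h: "(mat 1 - M) *v x = 0"
  have eq: "x$i = (\<Sum>j\<in>UNIV. M$i$j * x$j)" for i
  proof -
    have "(mat 1 - M) *v x = x - M *v x"
      by (simp add: matrix_vector_mult_diff_rdistrib)
    then have "(x - M *v x)$i = 0" using h by simp
    then show ?thesis
      by (simp add: matrix_vector_mult_def)
  qed
  have "x$i = 0" for i
    using wf
  proof (induct i rule: wf_induct_rule)
    case (less i)
    have "(\<Sum>j\<in>UNIV. M$i$j * x$j) = 0"
    proof (rule sum.neutral, intro ballI)
      fix j show "M$i$j * x$j = 0"
        using supp[of i j] less by (cases "M$i$j = 0") auto
    qed
    then show ?case using eq[of i] by simp
  qed
  then show "x = 0" by (simp add: vec_eq_iff)
qed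

lemma matrix_inv_props:
  fixes A :: "real^'n::finite^'n"
  assumes "invertible A"
  shows "A ** matrix_inv A = mat 1" "matrix_inv A ** A = mat 1"
proof -
  have "\<exists>A'. A ** A' = mat 1 \<and> A' ** A = mat 1" using assms invertible_def by blast
  then have "A ** matrix_inv A = mat 1 \<and> matrix_inv A ** A = mat 1"
    unfolding matrix_inv_def by (rule someI_ex)
  then show "A ** matrix_inv A = mat 1" "matrix_inv A ** A = mat 1" by auto
qed

lemma rank_inv_mult:
  fixes P Q D :: "real^'n::finite^'n"
  assumes "invertible P" "invertible Q"
  shows "rank (P ** D ** Q) = rank D"
proof (rule antisym)
  show "rank (P ** D ** Q) \<le> rank D"
    by (meson order_trans rank_mul_le_left rank_mul_le_right)
  have "matrix_inv P ** (P ** D ** Q) ** matrix_inv Q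
      = (matrix_inv P ** P) ** D ** (Q ** matrix_inv Q)"
    by (simp add: matrix_mul_assoc)
  then have "D = matrix_inv P ** (P ** D ** Q) ** matrix_inv Q"
    using matrix_inv_props[OF assms(1)] matrix_inv_props[OF assms(2)]
    by simp
  then have "rank D \<le> rank (matrix_inv P ** (P ** D ** Q))"
    by (metis rank_mul_le_left)
  also have "\<dots> \<le> rank (P ** D ** Q)" by (rule rank_mul_le_right)
  finally show "rank D \<le> rank (P ** D ** Q)" .
qed

lemma rank_one_row:
  fixes D :: "real^'n::finite^'m"
  assumes "\<And>i j. i \<noteq> k \<Longrightarrow> D$i$j = 0"
  shows "rank D \<le> 1"
proof -
  have "row i D = 0" if "i \<noteq> k" for i
    using assms that by (simp add: row_def vec_eq_iff)
  then have "rows D \<subseteq> {0, row k D}"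
  proof -
    assume h: "\<And>i. i \<noteq> k \<Longrightarrow> row i D = 0"
    show ?thesis
    proof
      fix r assume "r \<in> rows D"
      then obtain i where r: "r = row i D" unfolding rows_def by blast
      show "r \<in> {0, row k D}" using h[of i] r by (cases "i = k") simp_all
    qed
  qed
  then have "dim (rows D) \<le> dim {0, row k D}" by (rule dim_subset)
  also have "dim {0, row k D} = dim {row k D}"
    by (simp add: dim_insert span_zero)
  also have "\<dots> \<le> 1" using dim_le_card'[of "{row k D}"] by simp
  finally show ?thesis by (simp add: row_rank_def)
qed

theorem proposition3p7:
  fixes E :: "'n::finite \<Rightarrow> 'n \<Rightarrow> bool"
    and L0 :: "real^'n^'n"
    and L :: "'n \<Rightarrow> real^'n^'n"
    and k :: 'n
  assumes dag: "is_dag E"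
    and supp0: "\<And>i j. L0 $ i $ j \<noteq> 0 \<longleftrightarrow> E j i"
    and other_rows: "\<And>k' i j. i \<noteq> k' \<Longrightarrow> L k' $ i $ j = L0 $ i $ j"
    and changed: "\<And>k' j. L0 $ k' $ j \<noteq> 0 \<Longrightarrow> L k' $ k' $ j \<noteq> L0 $ k' $ j"
    and zero: "\<And>k' j. L0 $ k' $ j = 0 \<Longrightarrow> L k' $ k' $ j = 0"
  shows "rank (matrix_inv (mat 1 - L k) - matrix_inv (mat 1 - L0)) \<le> 1 \<and>
         (rank (matrix_inv (mat 1 - L k) - matrix_inv (mat 1 - L0)) = 1
            \<longleftrightarrow> ancestors E k \<noteq> {})"
proof -
  have wf: "wf (edge_rel E)" by (rule wf_edge[OF dag])
  have inv0: "invertible (mat 1 - L0)"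
    by (rule inv_I_minus[OF wf]) (use supp0 in \<open>auto simp: edge_rel_def\<close>)
  have invk: "invertible (mat 1 - L k)"
  proof (rule inv_I_minus[OF wf])
    fix i j assume "L k $ i $ j \<noteq> 0"
    then have "L0 $ i $ j \<noteq> 0" using other_rows zero by (cases "i = k") auto
    then show "(j, i) \<in> edge_rel E" using supp0 by (auto simp: edge_rel_def)
  qed
  define A0 where "A0 = mat 1 - L0"
  define Ak where "Ak = mat 1 - L k"
  define D where "D = L k - L0"
  have AD: "A0 - Ak = D" unfolding A0_def Ak_def D_def by simp
  have delta: "matrix_inv Ak - matrix_inv A0 = matrix_inv Ak ** D ** matrix_inv A0"
  proof -
    have "matrix_inv Ak ** D ** matrix_inv A0
          = matrix_inv Ak ** (A0 ** matrix_inv A0) - (matrix_inv Ak ** Ak) ** matrix_inv A0"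
      unfolding AD[symmetric]
      by (simp add: mm_sub_l mm_sub_r matrix_mul_assoc)
    also have "\<dots> = matrix_inv Ak - matrix_inv A0"
      using matrix_inv_props[OF inv0] matrix_inv_props[OF invk]
      unfolding A0_def Ak_def by simp
    finally show ?thesis by simp
  qed
  have invi0: "invertible (matrix_inv A0)"
    using matrix_inv_props[OF inv0] unfolding invertible_def A0_def by blast
  have invik: "invertible (matrix_inv Ak)"
    using matrix_inv_props[OF invk] unfolding invertible_def Ak_def by blast
  have r: "rank (matrix_inv Ak - matrix_inv A0) = rank D"
    unfolding delta by (rule rank_inv_mult[OF invik invi0])
  have rD: "rank D \<le> 1"
    by (rule rank_one_row[of k]) (simp add: D_def other_rows)
  have Dnz: "D \<noteq> 0 \<longleftrightarrow> (\<exists>j. L0$k$j \<noteq> 0)"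
  proof
    assume "D \<noteq> 0"
    then obtain i j where "D$i$j \<noteq> 0" by (auto simp: vec_eq_iff)
    then have dij: "L k $ i $ j \<noteq> L0 $ i $ j" by (simp add: D_def)
    have ik: "i = k"
    proof (rule ccontr)
      assume "i \<noteq> k" then show False using other_rows[of i k j] dij by simp
    qed
    have "L k $ k $ j \<noteq> L0 $ k $ j" using dij ik by simp
    then have "L0 $ k $ j \<noteq> 0" using zero[of k j] by auto
    then show "\<exists>j. L0$k$j \<noteq> 0" by blast
  next
    assume "\<exists>j. L0$k$j \<noteq> 0"
    then obtain j where "L0$k$j \<noteq> 0" by blast
    then have "D$k$j \<noteq> 0" using changed by (simp add: D_def)
    then show "D \<noteq> 0" by auto
  qed
  have anc: "(\<exists>j. L0$k$j \<noteq> 0) \<longleftrightarrow> ancestors E k \<noteq> {}"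
  proof
    assume "\<exists>j. L0$k$j \<noteq> 0"
    then obtain j where ej: "E j k" using supp0 by blast
    have "j \<noteq> k"
    proof
      assume "j = k"
      then have "(k,k) \<in> (edge_rel E)\<^sup>+" using ej by (auto simp: edge_rel_def)
      then show False using dag unfolding is_dag_def acyclic_def by blast
    qed
    then have "j \<in> ancestors E k" using ej by (auto simp: ancestors_def edge_rel_def)
    then show "ancestors E k \<noteq> {}" by blast
  next
    assume "ancestors E k \<noteq> {}"
    then obtain m where "(m,k) \<in> (edge_rel E)\<^sup>+" by (auto simp: ancestors_def)
    then obtain j where "(j,k) \<in> edge_rel E" by (meson tranclE)
    then show "\<exists>j. L0$k$j \<noteq> 0" using supp0 by (auto simp: edge_rel_def)
  qed
  have "rank D = 1 \<longleftrightarrow> D \<noteq> 0" using rD rank_eq_0[of D] by auto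
  then show ?thesis using r rD Dnz anc unfolding A0_def Ak_def by simp
qed

end
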